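(* Let $n\ge 1$ and let $G=P_{n+1}$ be the path $v_1v_2\cdots v_{n+1}$ whose edges $v_iv_{i+1}$ have pairwise distinct weights $w_i\in(0,1)$, $1\le i\le n$. For $1\le i\le n$ let $W_i=\prod_{j\ne i}(w_j-w_i)$. Then for every integer $t\ge n$, \[\Pr\big(\operatorname{ptw}(G,\{v_1\})\le t\big)=w_1w_2\cdots w_n\sum_{i=1}^{n}\frac{(1-w_i)^{n-1}-(1-w_i)^{t}}{w_iW_i},\] and hence, for $\alpha\in(0,1)$, $\operatorname{cptw}(G,\{v_1\},\alpha)$ is the minimum value of $t$ for which this quantity is at least $\alpha$.
   Context: Let $G$ be a finite simple graph in which each edge $uv$ has a weight $w_{uv}\in(0,1)$. Weighted zero forcing: start with a set $B\subseteq V(G)$ of blue vertices, all other vertices white. In each round, simultaneously, for every blue vertex $u$ that has exactly one white neighbor $v$ (with respect to the coloring at the start of the round), $u$ attempts to force $v$, succeeding with probability $w_{uv}$, all attempts being independent; a white vertex becomes blue at the end of the round if at least one attempt on it succeeds. $\operatorname{ptw}(G,B)$ is the random variable giving the round in which the last white vertex becomes blue ($0$ if $B=V(G)$). For $\alpha\in(0,1)$, $\operatorname{cptw}(G,B,\alpha)$ is the least $t\ge 0$ with $\Pr(\operatorname{ptw}(G,B)\le t)\ge\alpha$. *)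

theory Defs
  imports "HOL-Probability.Probability"
begin

text \<open>Weighted zero forcing on a finite simple graph with vertex set V, symmetric
irreflexive edge relation E (assumed to live on V) and edge weights w u v.\<close>

definition force_pairs :: "'a set \<Rightarrow> ('a \<Rightarrow> 'a \<Rightarrow> bool) \<Rightarrow> 'a set \<Rightarrow> ('a \<times> 'a) set" where
  "force_pairs V E B = {(u, v). u \<in> B \<and> v \<in> V \<and> v \<notin> B \<and> E u v \<and>
      (\<forall>x \<in> V. E u x \<and> x \<notin> B \<longrightarrow> x = v)}"

definition round_pmf :: "'a set \<Rightarrow> ('a \<Rightarrow> 'a \<Rightarrow> bool) \<Rightarrow> ('a \<Rightarrow> 'a \<Rightarrow> real) \<Rightarrow> 'a set \<Rightarrow> 'a set pmf" where
  "round_pmf V E w B =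
     map_pmf (\<lambda>s. B \<union> {v. \<exists>u. (u, v) \<in> force_pairs V E B \<and> s (u, v)})
       (Pi_pmf (force_pairs V E B) False (\<lambda>p. bernoulli_pmf (w (fst p) (snd p))))"

primrec blue_after :: "'a set \<Rightarrow> ('a \<Rightarrow> 'a \<Rightarrow> bool) \<Rightarrow> ('a \<Rightarrow> 'a \<Rightarrow> real) \<Rightarrow> 'a set \<Rightarrow> nat \<Rightarrow> 'a set pmf" where
  "blue_after V E w B 0 = return_pmf B"
| "blue_after V E w B (Suc t) = bind_pmf (blue_after V E w B t) (round_pmf V E w)"

text \<open>Pr(ptw(G,B) \<le> t): all vertices are blue at the end of round t.\<close>
definition prob_ptw_le :: "'a set \<Rightarrow> ('a \<Rightarrow> 'a \<Rightarrow> bool) \<Rightarrow> ('a \<Rightarrow> 'a \<Rightarrow> real) \<Rightarrow> 'a set \<Rightarrow> nat \<Rightarrow> real" where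
  "prob_ptw_le V E w B t = measure_pmf.prob (blue_after V E w B t) {S. V \<subseteq> S}"

definition cptw :: "'a set \<Rightarrow> ('a \<Rightarrow> 'a \<Rightarrow> bool) \<Rightarrow> ('a \<Rightarrow> 'a \<Rightarrow> real) \<Rightarrow> 'a set \<Rightarrow> real \<Rightarrow> nat" where
  "cptw V E w B \<alpha> = (LEAST t. prob_ptw_le V E w B t \<ge> \<alpha>)"

definition path_V :: "nat \<Rightarrow> nat set" where "path_V n = {1..n+1}"
definition path_E :: "nat \<Rightarrow> nat \<Rightarrow> bool" where "path_E i j = (j = i + 1 \<or> i = j + 1)"
definition path_w :: "(nat \<Rightarrow> real) \<Rightarrow> nat \<Rightarrow> nat \<Rightarrow> real" where "path_w wt i j = wt (min i j)"

end

theory Submission imports Defs "HOL-Computational_Algebra.Polynomial" begin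

lemma interp:
  fixes a :: "nat \<Rightarrow> real"
  assumes inj: "inj_on a I" and fin: "finite I" and ne: "I \<noteq> {}"
  shows "(\<Sum>i\<in>I. \<Prod>j\<in>I-{i}. a j / (a j - a i)) = 1"
proof -
  define p where "p = (\<Sum>i\<in>I. smult (1 / (\<Prod>j\<in>I-{i}. (a i - a j))) (\<Prod>j\<in>I-{i}. [:-a j, 1:]))"
  have polyp: "poly p x = (\<Sum>i\<in>I. (\<Prod>j\<in>I-{i}. (x - a j)) / (\<Prod>j\<in>I-{i}. (a i - a j)))" for x
    unfolding p_def by (simp add: poly_sum poly_prod)
  have degp: "degree p \<le> card I - 1"
    unfolding p_def
  proof (rule degree_sum_le)
    fix i assume "i \<in> I"
    have "degree (\<Prod>j\<in>I-{i}. [:-a j, 1:]) \<le> (\<Sum>j\<in>I-{i}. degree [:-a j, 1:])"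
      using degree_prod_sum_le[of "I-{i}" "\<lambda>j. [:-a j, 1:]"] fin by (simp add: o_def)
    also have "\<dots> = card (I - {i})" by simp
    also have "\<dots> = card I - 1" using \<open>i \<in> I\<close> fin by simp
    finally show "degree (smult (1 / (\<Prod>j\<in>I-{i}. (a i - a j))) (\<Prod>j\<in>I-{i}. [:-a j, 1:])) \<le> card I - 1"
      by (meson degree_smult_le order_trans)
  qed (use fin in auto)
  have pk: "poly p (a k) = 1" if k: "k \<in> I" for k
  proof -
    have z: "(\<Prod>j\<in>I-{i}. (a k - a j)) = 0" if "i \<in> I - {k}" for i
      using that k fin by (intro prod_zero) auto
    have nz: "(\<Prod>j\<in>I-{k}. (a k - a j)) \<noteq> 0"
      using fin inj k by (subst prod_zero_iff) (auto simp: inj_on_def)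
    have "(\<Sum>i\<in>I - {k}. (\<Prod>j\<in>I-{i}. (a k - a j)) / (\<Prod>j\<in>I-{i}. (a i - a j))) = 0"
      by (rule sum.neutral) (use z in simp)
    then show ?thesis unfolding polyp
      using k fin nz by (simp add: sum.remove[of I k])
  qed
  have "p = [:1:]"
  proof (rule poly_eqI_degree[where A="a ` I"])
    show "poly p x = poly [:1:] x" if "x \<in> a ` I" for x using that pk by auto
    have c: "card (a ` I) = card I" using card_image[OF inj] .
    have "card I > 0" using fin ne by auto
    then show "degree p < card (a ` I)" "degree [:1:] < card (a ` I)" using c degp by auto
  qed
  hence "poly p 0 = 1" by simp
  moreover have "poly p 0 = (\<Sum>i\<in>I. \<Prod>j\<in>I-{i}. a j / (a j - a i))"
    unfolding polyp
  proof (rule sum.cong)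
    fix i assume "i \<in> I"
    have "(\<Prod>j\<in>I-{i}. (0 - a j)) / (\<Prod>j\<in>I-{i}. (a i - a j)) = (\<Prod>j\<in>I-{i}. (0 - a j) / (a i - a j))"
      by (simp only: prod_dividef)
    also have "\<dots> = (\<Prod>j\<in>I-{i}. a j / (a j - a i))"
      by (rule prod.cong) (auto simp: minus_divide_right)
    finally show "(\<Prod>j\<in>I-{i}. (0 - a j)) / (\<Prod>j\<in>I-{i}. (a i - a j)) = (\<Prod>j\<in>I-{i}. a j / (a j - a i))" .
  qed simp
  ultimately show ?thesis by simp
qed

definition cc :: "(nat \<Rightarrow> real) \<Rightarrow> nat \<Rightarrow> nat \<Rightarrow> real" where
  "cc wt m i = (\<Prod>j=1..m. wt j) / (wt i * (\<Prod>j\<in>{1..m}-{i}. wt j - wt i))"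
definition SS :: "(nat \<Rightarrow> real) \<Rightarrow> nat \<Rightarrow> nat \<Rightarrow> real" where
  "SS wt m r = (\<Sum>i=1..m. cc wt m i * (1 - wt i) ^ r)"

lemma SS0:
  assumes "1 \<le> m" "\<And>i. i \<in> {1..m} \<Longrightarrow> wt i \<noteq> 0" "inj_on wt {1..m}"
  shows "SS wt m 0 = 1"
proof -
  have "SS wt m 0 = (\<Sum>i\<in>{1..m}. \<Prod>j\<in>{1..m}-{i}. wt j / (wt j - wt i))"
    unfolding SS_def
  proof (rule sum.cong)
    fix i assume i: "i \<in> {1..m}"
    have "(\<Prod>j=1..m. wt j) = wt i * (\<Prod>j\<in>{1..m}-{i}. wt j)"
      using i by (simp add: prod.remove)
    then have "cc wt m i = (\<Prod>j\<in>{1..m}-{i}. wt j) / (\<Prod>j\<in>{1..m}-{i}. wt j - wt i)"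
      unfolding cc_def using assms(2)[OF i] by simp
    then show "cc wt m i * (1 - wt i) ^ 0 = (\<Prod>j\<in>{1..m}-{i}. wt j / (wt j - wt i))"
      by (simp add: prod_dividef)
  qed simp
  also have "\<dots> = 1" by (rule interp) (use assms in auto)
  finally show ?thesis .
qed

lemma SSrec:
  assumes "\<And>i. i \<in> {1..Suc k} \<Longrightarrow> wt i \<noteq> 0" "inj_on wt {1..Suc k}"
  shows "SS wt (Suc k) (Suc r) = (1 - wt (Suc k)) * SS wt (Suc k) r + wt (Suc k) * SS wt k r"
proof -
  have key: "cc wt (Suc k) i * (wt (Suc k) - wt i) = wt (Suc k) * cc wt k i" if i: "i \<in> {1..k}" for i
  proof -
    have ne: "wt (Suc k) - wt i \<noteq> 0" using inj_onD[OF assms(2), of "Suc k" i] i by force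
    have s: "{1..Suc k} - {i} = insert (Suc k) ({1..k} - {i})" using i by auto
    have p1: "(\<Prod>j\<in>{1..Suc k}-{i}. wt j - wt i) = (wt (Suc k) - wt i) * (\<Prod>j\<in>{1..k}-{i}. wt j - wt i)"
      unfolding s by (subst prod.insert) auto
    have p2: "(\<Prod>j=1..Suc k. wt j) = wt (Suc k) * (\<Prod>j=1..k. wt j)"
      by (simp add: prod.cl_ivl_Suc mult.commute)
    show ?thesis unfolding cc_def p1 p2 using ne by (simp add: field_split_simps)
  qed
  have "SS wt (Suc k) (Suc r) - (1 - wt (Suc k)) * SS wt (Suc k) r
      = (\<Sum>i=1..Suc k. cc wt (Suc k) i * (1 - wt i) ^ r * (wt (Suc k) - wt i))"
    unfolding SS_def by (simp add: sum_distrib_left sum_subtractf[symmetric] algebra_simps)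
  also have "\<dots> = (\<Sum>i=1..k. cc wt (Suc k) i * (1 - wt i) ^ r * (wt (Suc k) - wt i))"
    by simp
  also have "\<dots> = (\<Sum>i=1..k. wt (Suc k) * cc wt k i * (1 - wt i) ^ r)"
    by (rule sum.cong) (simp_all add: key[symmetric] algebra_simps)
  also have "\<dots> = wt (Suc k) * SS wt k r"
    unfolding SS_def by (simp add: sum_distrib_left algebra_simps)
  finally show ?thesis by simp
qed

lemma SS_one:
  assumes "\<And>i. i \<in> {1..m} \<Longrightarrow> wt i \<noteq> 0" "inj_on wt {1..m}" "r < m"
  shows "SS wt m r = 1"
  using assms
proof (induction m arbitrary: r)
  case 0 then show ?case by simp
next
  case (Suc k)
  have h1: "\<And>i. i \<in> {1..k} \<Longrightarrow> wt i \<noteq> 0" using Suc.prems by auto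
  have h2: "inj_on wt {1..k}" using Suc.prems(2) by (rule inj_on_subset) auto
  have IHk: "\<And>r. r < k \<Longrightarrow> SS wt k r = 1" using Suc.IH h1 h2 by blast
  have h1': "\<And>i. i \<in> {1..Suc k} \<Longrightarrow> wt i \<noteq> 0" and h2': "inj_on wt {1..Suc k}" using Suc.prems by auto
  show ?case using Suc.prems(3)
  proof (induction r)
    case 0 then show ?case using SS0[of "Suc k" wt] Suc.prems by auto
  next
    case (Suc r)
    then have "SS wt (Suc k) r = 1" "SS wt k r = 1" using Suc.IH IHk by auto
    then show ?case using SSrec[of k wt r, OF h1' h2'] by simp
  qed
qed

definition stp :: "(nat \<Rightarrow> real) \<Rightarrow> nat \<Rightarrow> nat \<Rightarrow> nat pmf" where
  "stp wt n k = (if k \<le> n then map_pmf (\<lambda>b. if b then Suc k else k) (bernoulli_pmf (wt k)) else return_pmf k)"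

primrec chn :: "(nat \<Rightarrow> real) \<Rightarrow> nat \<Rightarrow> nat \<Rightarrow> nat pmf" where
  "chn wt n 0 = return_pmf 1"
| "chn wt n (Suc t) = bind_pmf (chn wt n t) (stp wt n)"

lemma fp:
  assumes "1 \<le> k" "k \<le> Suc n"
  shows "force_pairs (path_V n) path_E {1..k} = (if k \<le> n then {(k, Suc k)} else {})"
  using assms unfolding force_pairs_def path_V_def path_E_def by auto

lemma rnd:
  assumes "1 \<le> k" "k \<le> Suc n"
  shows "round_pmf (path_V n) path_E (path_w wt) {1..k} = map_pmf (\<lambda>k. {1..k}) (stp wt n k)"
proof (cases "k \<le> n")
  case True
  have "round_pmf (path_V n) path_E (path_w wt) {1..k} =
     map_pmf (\<lambda>s. {1..k} \<union> {v. \<exists>u. (u, v) \<in> {(k, Suc k)} \<and> s (u, v)})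
       (Pi_pmf {(k, Suc k)} False (\<lambda>p. bernoulli_pmf (path_w wt (fst p) (snd p))))"
    unfolding round_pmf_def fp[OF assms] using True by simp
  also have "\<dots> = map_pmf (\<lambda>k. {1..k}) (stp wt n k)"
    unfolding Pi_pmf_singleton stp_def using True
    by (auto simp: pmf.map_comp o_def path_w_def intro!: map_pmf_cong split: if_splits)
  finally show ?thesis .
next
  case False
  then show ?thesis unfolding round_pmf_def fp[OF assms] stp_def by simp
qed

lemma set_stp: "set_pmf (stp wt n k) \<subseteq> {k, Suc k} \<inter> {..max k (Suc n)}"
  unfolding stp_def by auto

lemma set_chn: "set_pmf (chn wt n t) \<subseteq> {1..Suc n}"
proof (induction t)
  case 0 then show ?case by simp
next
  case (Suc t)
  show ?case
  proof
    fix j assume "j \<in> set_pmf (chn wt n (Suc t))"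
    then obtain k where k: "k \<in> set_pmf (chn wt n t)" "j \<in> set_pmf (stp wt n k)" by auto
    then show "j \<in> {1..Suc n}" using Suc.IH set_stp[of wt n k] unfolding stp_def
      by (auto split: if_splits)
  qed
qed

lemma blue:
  "blue_after (path_V n) path_E (path_w wt) {1} t = map_pmf (\<lambda>k. {1..k}) (chn wt n t)"
proof (induction t)
  case 0 then show ?case by simp
next
  case (Suc t)
  have "blue_after (path_V n) path_E (path_w wt) {1} (Suc t) =
      bind_pmf (chn wt n t) (\<lambda>k. round_pmf (path_V n) path_E (path_w wt) {1..k})"
    by (simp only: blue_after.simps Suc.IH bind_map_pmf)
  also have "\<dots> = bind_pmf (chn wt n t) (\<lambda>k. map_pmf (\<lambda>k. {1..k}) (stp wt n k))"
    by (rule bind_pmf_cong) (use set_chn[of wt n t] rnd in auto)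
  also have "\<dots> = map_pmf (\<lambda>k. {1..k}) (chn wt n (Suc t))"
    by (simp add: map_bind_pmf)
  finally show ?case .
qed

lemma meas_sum:
  assumes "set_pmf M \<subseteq> S" "finite S"
  shows "measure_pmf.prob M A = (\<Sum>k\<in>S. if k \<in> A then pmf M k else 0)"
proof -
  have "measure_pmf.prob M A = measure_pmf.prob M (A \<inter> S)"
    using measure_Int_set_pmf[of M A] measure_Int_set_pmf[of M "A \<inter> S"] assms(1)
    by (metis Int_absorb2 inf_assoc inf_commute)
  also have "\<dots> = sum (pmf M) (A \<inter> S)"
    using assms(2) by (simp add: measure_measure_pmf_finite)
  also have "\<dots> = (\<Sum>k\<in>S. if k \<in> A then pmf M k else 0)"
    using sum.inter_restrict[OF assms(2), of "pmf M" A] by (simp add: Int_commute)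
  finally show ?thesis .
qed

lemma chn_rec_meas:
  "measure_pmf.prob (chn wt n (Suc t)) {..m} =
     (\<Sum>k\<in>{1..Suc n}. pmf (chn wt n t) k * measure_pmf.prob (stp wt n k) {..m})"
proof -
  have pb: "pmf (chn wt n (Suc t)) j = (\<Sum>k\<in>{1..Suc n}. pmf (stp wt n k) j * pmf (chn wt n t) k)" for j
    unfolding chn.simps pmf_bind
    by (rule integral_measure_pmf_real) (use set_chn[of wt n t] in auto)
  have "measure_pmf.prob (chn wt n (Suc t)) {..m} = (\<Sum>j\<in>{..m}. pmf (chn wt n (Suc t)) j)"
    by (simp add: measure_measure_pmf_finite)
  also have "\<dots> = (\<Sum>k\<in>{1..Suc n}. pmf (chn wt n t) k * (\<Sum>j\<in>{..m}. pmf (stp wt n k) j))"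
    unfolding pb by (subst sum.swap) (simp add: sum_distrib_left mult.commute)
  also have "\<dots> = (\<Sum>k\<in>{1..Suc n}. pmf (chn wt n t) k * measure_pmf.prob (stp wt n k) {..m})"
    by (simp add: measure_measure_pmf_finite)
  finally show ?thesis .
qed

lemma stp_meas:
  assumes "k \<in> {1..Suc n}" "1 \<le> m" "m \<le> n" "\<And>i. i \<in> {1..n} \<Longrightarrow> 0 < wt i \<and> wt i < 1"
  shows "measure_pmf.prob (stp wt n k) {..m} =
     (1 - wt m) * (if k \<le> m then 1 else 0) + wt m * (if k \<le> m - 1 then 1 else 0)"
proof (cases "k \<le> n")
  case True
  have w: "0 \<le> wt k" "wt k \<le> 1" using assms(4)[of k] assms(1) True by auto
  consider "k < m" | "k = m" | "k > m" by linarith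
  then show ?thesis
  proof cases
    case 1
    then have "(\<lambda>b. if b then Suc k else k) -` {..m} = UNIV" by auto
    then show ?thesis using 1 True unfolding stp_def by simp
  next
    case 2
    then have "(\<lambda>b. if b then Suc k else k) -` {..m} = {False}" by auto
    then show ?thesis using 2 True w assms(2) unfolding stp_def by (simp add: measure_pmf_single)
  next
    case 3
    then have "(\<lambda>b. if b then Suc k else k) -` {..m} = {}" by (auto split: if_splits)
    then show ?thesis using 3 True unfolding stp_def by simp
  qed
next
  case False
  then show ?thesis using assms unfolding stp_def by auto
qed

lemma H_rec:
  assumes "1 \<le> m" "m \<le> n" "\<And>i. i \<in> {1..n} \<Longrightarrow> 0 < wt i \<and> wt i < 1"
  shows "measure_pmf.prob (chn wt n (Suc t)) {..m} =
    (1 - wt m) * measure_pmf.prob (chn wt n t) {..m} + wt m * measure_pmf.prob (chn wt n t) {..m-1}"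
proof -
  have "measure_pmf.prob (chn wt n (Suc t)) {..m} =
     (\<Sum>k\<in>{1..Suc n}. pmf (chn wt n t) k * ((1 - wt m) * (if k \<le> m then 1 else 0) + wt m * (if k \<le> m - 1 then 1 else 0)))"
    unfolding chn_rec_meas by (rule sum.cong) (use stp_meas[OF _ assms] in auto)
  also have "\<dots> = (1 - wt m) * (\<Sum>k\<in>{1..Suc n}. if k \<in> {..m} then pmf (chn wt n t) k else 0)
      + wt m * (\<Sum>k\<in>{1..Suc n}. if k \<in> {..m-1} then pmf (chn wt n t) k else 0)"
    unfolding sum_distrib_left sum.distrib[symmetric] by (rule sum.cong) (auto simp: algebra_simps)
  also have "\<dots> = (1 - wt m) * measure_pmf.prob (chn wt n t) {..m} + wt m * measure_pmf.prob (chn wt n t) {..m-1}"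
    using meas_sum[OF set_chn[of wt n t], of "{..m}"] meas_sum[OF set_chn[of wt n t], of "{..m-1}"] by simp
  finally show ?thesis .
qed

lemma H_SS:
  assumes "m \<le> n" "\<And>i. i \<in> {1..n} \<Longrightarrow> 0 < wt i \<and> wt i < 1" "inj_on wt {1..n}"
  shows "measure_pmf.prob (chn wt n t) {..m} = SS wt m t"
  using assms(1)
proof (induction m arbitrary: t)
  case 0
  have "measure_pmf.prob (chn wt n t) {..0} = 0"
    using meas_sum[OF set_chn[of wt n t], of "{..0}"] by simp
  then show ?case by (simp add: SS_def)
next
  case (Suc m)
  have IH: "\<And>t. measure_pmf.prob (chn wt n t) {..m} = SS wt m t" using Suc by simp
  have h1: "\<And>i. i \<in> {1..Suc m} \<Longrightarrow> wt i \<noteq> 0" using assms(2) Suc.prems by force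
  have h2: "inj_on wt {1..Suc m}" using assms(3) by (rule inj_on_subset) (use Suc.prems in auto)
  show ?case
  proof (induction t)
    case 0 then show ?case using SS0[of "Suc m" wt, OF _ h1 h2] by simp
  next
    case (Suc t)
    show ?case
      using H_rec[of "Suc m" n wt t, OF _ \<open>Suc m \<le> n\<close> assms(2)] Suc.IH IH[of t] SSrec[OF h1 h2, of t]
      by simp
  qed
qed

theorem mainTheorem11:
  fixes n :: nat and wt :: "nat \<Rightarrow> real"
  assumes "n \<ge> 1"
    and "\<And>i. i \<in> {1..n} \<Longrightarrow> 0 < wt i \<and> wt i < 1"
    and "inj_on wt {1..n}"
  defines "W \<equiv> (\<lambda>i. \<Prod>j\<in>{1..n} - {i}. wt j - wt i)"
  defines "F \<equiv> (\<lambda>t::nat. (\<Prod>i=1..n. wt i) *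
              (\<Sum>i=1..n. ((1 - wt i) ^ (n - 1) - (1 - wt i) ^ t) / (wt i * W i)))"
  shows "(\<forall>t \<ge> n. prob_ptw_le (path_V n) path_E (path_w wt) {1} t = F t) \<and>
         (\<forall>\<alpha>::real. 0 < \<alpha> \<and> \<alpha> < 1 \<longrightarrow>
            cptw (path_V n) path_E (path_w wt) {1} \<alpha> = (LEAST t. n \<le> t \<and> F t \<ge> \<alpha>))"
proof -
  have hy: "\<And>i. i \<in> {1..n} \<Longrightarrow> wt i \<noteq> 0" using assms(2) by force
  have prob_eq: "prob_ptw_le (path_V n) path_E (path_w wt) {1} t = 1 - SS wt n t" for t
  proof -
    have e: "(\<lambda>k. {1..k}) -` {S. path_V n \<subseteq> S} = UNIV - {..n}"
      unfolding path_V_def by auto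
    have "prob_ptw_le (path_V n) path_E (path_w wt) {1} t = measure_pmf.prob (chn wt n t) (UNIV - {..n})"
      unfolding prob_ptw_le_def blue measure_map_pmf e ..
    also have "\<dots> = 1 - measure_pmf.prob (chn wt n t) {..n}"
      using measure_pmf.prob_compl[of "{..n}" "chn wt n t"] by simp
    also have "\<dots> = 1 - SS wt n t" using H_SS[of n n wt t] assms(2,3) by simp
    finally show ?thesis .
  qed
  have F_eq: "F t = SS wt n (n - 1) - SS wt n t" for t
    unfolding F_def SS_def cc_def W_def sum_distrib_left sum_subtractf[symmetric]
    by (rule sum.cong) (simp_all add: diff_divide_distrib right_diff_distrib)
  have one: "SS wt n t = 1" if "t < n" for t using SS_one[OF hy assms(3) that] .
  have F_eq2: "F t = 1 - SS wt n t" for t using F_eq one[of "n - 1"] assms(1) by simp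
  have part1: "\<forall>t \<ge> n. prob_ptw_le (path_V n) path_E (path_w wt) {1} t = F t"
    using prob_eq F_eq2 by simp
  have part2: "cptw (path_V n) path_E (path_w wt) {1} \<alpha> = (LEAST t. n \<le> t \<and> F t \<ge> \<alpha>)"
    if a: "0 < \<alpha> \<and> \<alpha> < 1" for \<alpha>
  proof -
    have "(\<lambda>t. prob_ptw_le (path_V n) path_E (path_w wt) {1} t \<ge> \<alpha>) = (\<lambda>t. n \<le> t \<and> F t \<ge> \<alpha>)"
    proof
      fix t
      show "(prob_ptw_le (path_V n) path_E (path_w wt) {1} t \<ge> \<alpha>) = (n \<le> t \<and> F t \<ge> \<alpha>)"
      proof (cases "n \<le> t")
        case True then show ?thesis using part1 by simp
      next
        case False then show ?thesis using prob_eq one[of t] a by simp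
      qed
    qed
    then show ?thesis unfolding cptw_def by simp
  qed
  show ?thesis using part1 part2 by blast
qed

end
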